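(* Let $G$ be a group, let $S=\bigoplus_{g\in G}S_g$ be an epsilon-strongly $G$-graded ring, and let $I$ be a homogeneous ideal of $S$. Then the natural $G$-grading $S/I=\bigoplus_{g\in G}(S_g+I)/I$ of the factor ring is epsilon-strong.
   Context: Rings are associative, not necessarily unital; $XY$ denotes finite sums of products. A $G$-grading: $S=\bigoplus_gS_g$, $S_gS_h\subseteq S_{gh}$. The grading is epsilon-strong if $S_gS_{g^{-1}}S_g=S_g$ for all $g$ and each ring $S_gS_{g^{-1}}$ has a multiplicative identity element. An ideal $I$ is homogeneous if $I=\bigoplus_{g\in G}(I\cap S_g)$. *)

theory Defs
  imports "HOL-Algebra.QuotRing"
begin

text \<open>We use HOL-Algebra's ring
record (the field one is simply ignored) and define non-unital rings, ideals,
products of subsets (finite sums of products), gradings and epsilon-strong gradings.\<close>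

definition nonunital_ring :: "('a, 'b) ring_scheme \<Rightarrow> bool" where
  "nonunital_ring R \<longleftrightarrow> abelian_group R \<and>
     (\<forall>x\<in>carrier R. \<forall>y\<in>carrier R. x \<otimes>\<^bsub>R\<^esub> y \<in> carrier R) \<and>
     (\<forall>x\<in>carrier R. \<forall>y\<in>carrier R. \<forall>z\<in>carrier R.
        (x \<otimes>\<^bsub>R\<^esub> y) \<otimes>\<^bsub>R\<^esub> z = x \<otimes>\<^bsub>R\<^esub> (y \<otimes>\<^bsub>R\<^esub> z)) \<and>
     (\<forall>x\<in>carrier R. \<forall>y\<in>carrier R. \<forall>z\<in>carrier R.
        (x \<oplus>\<^bsub>R\<^esub> y) \<otimes>\<^bsub>R\<^esub> z = x \<otimes>\<^bsub>R\<^esub> z \<oplus>\<^bsub>R\<^esub> y \<otimes>\<^bsub>R\<^esub> z \<and>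
        z \<otimes>\<^bsub>R\<^esub> (x \<oplus>\<^bsub>R\<^esub> y) = z \<otimes>\<^bsub>R\<^esub> x \<oplus>\<^bsub>R\<^esub> z \<otimes>\<^bsub>R\<^esub> y)"

definition nonunital_ideal :: "'a set \<Rightarrow> ('a, 'b) ring_scheme \<Rightarrow> bool" where
  "nonunital_ideal I R \<longleftrightarrow> additive_subgroup I R \<and>
     (\<forall>a\<in>I. \<forall>x\<in>carrier R. x \<otimes>\<^bsub>R\<^esub> a \<in> I \<and> a \<otimes>\<^bsub>R\<^esub> x \<in> I)"

definition ring_subset_prod :: "('a, 'b) ring_scheme \<Rightarrow> 'a set \<Rightarrow> 'a set \<Rightarrow> 'a set" where
  "ring_subset_prod R X Y = {finsum R (\<lambda>i. f i \<otimes>\<^bsub>R\<^esub> h i) {..<(n::nat)} | n f h.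
                        \<forall>i<n. f i \<in> X \<and> h i \<in> Y}"

definition graded :: "('a, 'b) ring_scheme \<Rightarrow> ('g, 'c) monoid_scheme \<Rightarrow> ('g \<Rightarrow> 'a set) \<Rightarrow> bool" where
  "graded R G A \<longleftrightarrow>
     (\<forall>g\<in>carrier G. additive_subgroup (A g) R) \<and>
     (\<forall>g\<in>carrier G. \<forall>h\<in>carrier G. ring_subset_prod R (A g) (A h) \<subseteq> A (g \<otimes>\<^bsub>G\<^esub> h)) \<and>
     (\<forall>x\<in>carrier R. \<exists>F f. finite F \<and> F \<subseteq> carrier G \<and> (\<forall>g\<in>F. f g \<in> A g) \<and>
        x = finsum R f F) \<and>
     (\<forall>F f. finite F \<and> F \<subseteq> carrier G \<and> (\<forall>g\<in>F. f g \<in> A g) \<and> finsum R f F = \<zero>\<^bsub>R\<^esub>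
        \<longrightarrow> (\<forall>g\<in>F. f g = \<zero>\<^bsub>R\<^esub>))"

definition epsilon_strong :: "('a, 'b) ring_scheme \<Rightarrow> ('g, 'c) monoid_scheme \<Rightarrow> ('g \<Rightarrow> 'a set) \<Rightarrow> bool" where
  "epsilon_strong R G A \<longleftrightarrow> graded R G A \<and>
     (\<forall>g\<in>carrier G.
        ring_subset_prod R (ring_subset_prod R (A g) (A (inv\<^bsub>G\<^esub> g))) (A g) = A g \<and>
        (\<exists>e\<in>ring_subset_prod R (A g) (A (inv\<^bsub>G\<^esub> g)).
           \<forall>x\<in>ring_subset_prod R (A g) (A (inv\<^bsub>G\<^esub> g)). e \<otimes>\<^bsub>R\<^esub> x = x \<and> x \<otimes>\<^bsub>R\<^esub> e = x))"

definition homogeneous_ideal :: "('a, 'b) ring_scheme \<Rightarrow> ('g, 'c) monoid_scheme \<Rightarrow> ('g \<Rightarrow> 'a set) \<Rightarrow> 'a set \<Rightarrow> bool" where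
  "homogeneous_ideal R G A I \<longleftrightarrow>
     (\<forall>x\<in>I. \<exists>F f. finite F \<and> F \<subseteq> carrier G \<and> (\<forall>g\<in>F. f g \<in> I \<inter> A g) \<and> x = finsum R f F)"

definition quot_grading :: "('a, 'b) ring_scheme \<Rightarrow> ('g \<Rightarrow> 'a set) \<Rightarrow> 'a set \<Rightarrow> 'g \<Rightarrow> 'a set set" where
  "quot_grading R A I g = (\<lambda>a. I +>\<^bsub>R\<^esub> a) ` A g"

end

theory Submission imports Defs begin

locale qctx =
  fixes S :: "('a,'b) ring_scheme" (structure) and I :: "'a set"
  assumes R: "nonunital_ring S" and Id: "nonunital_ideal I S"
begin

lemma abS: "abelian_group S" using R unfolding nonunital_ring_def by blast

lemma mclosed: "x \<in> carrier S \<Longrightarrow> y \<in> carrier S \<Longrightarrow> x \<otimes> y \<in> carrier S"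
  using R unfolding nonunital_ring_def by blast
lemma ldistr: "x \<in> carrier S \<Longrightarrow> y \<in> carrier S \<Longrightarrow> z \<in> carrier S \<Longrightarrow> (x \<oplus> y) \<otimes> z = x \<otimes> z \<oplus> y \<otimes> z"
  using R unfolding nonunital_ring_def by blast
lemma rdistr: "x \<in> carrier S \<Longrightarrow> y \<in> carrier S \<Longrightarrow> z \<in> carrier S \<Longrightarrow> z \<otimes> (x \<oplus> y) = z \<otimes> x \<oplus> z \<otimes> y"
  using R unfolding nonunital_ring_def by blast
lemma idl: "a \<in> I \<Longrightarrow> x \<in> carrier S \<Longrightarrow> x \<otimes> a \<in> I" using Id unfolding nonunital_ideal_def by blast
lemma idr: "a \<in> I \<Longrightarrow> x \<in> carrier S \<Longrightarrow> a \<otimes> x \<in> I" using Id unfolding nonunital_ideal_def by blast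

sublocale abelian_subgroup I S
  using abelian_subgroupI3 abS Id unfolding nonunital_ideal_def by blast

abbreviation Q where "Q \<equiv> S Quot I"
definition pr where "pr x = I +> x"

lemma addQ: "add_monoid Q = S A_Mod I"
  by (simp add: FactRing_def A_FactGroup_def FactGroup_def A_RCOSETS_def set_add_def)

lemma abQ: "abelian_group Q"
proof -
  have "comm_group (add_monoid Q)" using addQ a_factorgroup_is_comm_group by simp
  then show ?thesis
    by (simp add: abelian_group_def abelian_group_axioms_def abelian_monoid_def comm_group.axioms(1))
qed

lemma carrierQ: "carrier Q = pr ` carrier S"
  by (auto simp: FactRing_def A_RCOSETS_def RCOSETS_def pr_def a_r_coset_def)

lemma pr_closed: "x \<in> carrier S \<Longrightarrow> pr x \<in> carrier Q"
  using carrierQ by auto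

lemma pr_add: "x \<in> carrier S \<Longrightarrow> y \<in> carrier S \<Longrightarrow> pr x \<oplus>\<^bsub>Q\<^esub> pr y = pr (x \<oplus> y)"
  using a_rcos_sum by (simp add: FactRing_def pr_def)

lemma zeroQ: "\<zero>\<^bsub>Q\<^esub> = I" by (simp add: FactRing_def)

lemma pr_zero_iff: "x \<in> carrier S \<Longrightarrow> pr x = \<zero>\<^bsub>Q\<^esub> \<longleftrightarrow> x \<in> I"
  by (metis a_rcos_const a_rcos_self pr_def zeroQ)

lemma pr_mult: assumes x: "x \<in> carrier S" and y: "y \<in> carrier S"
  shows "pr x \<otimes>\<^bsub>Q\<^esub> pr y = pr (x \<otimes> y)"
proof -
  have "I +> (a \<otimes> b) = I +> (x \<otimes> y)" if a: "a \<in> I +> x" and b: "b \<in> I +> y" for a b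
  proof -
    obtain i where i: "i \<in> I" "a = i \<oplus> x" using a by (auto simp: a_r_coset_def r_coset_def)
    obtain j where j: "j \<in> I" "b = j \<oplus> y" using b by (auto simp: a_r_coset_def r_coset_def)
    have iS: "i \<in> carrier S" "j \<in> carrier S" using i j a_subset by auto
    have bS: "b \<in> carrier S" using j iS y by simp
    have "a \<otimes> b = i \<otimes> b \<oplus> x \<otimes> b"
      using i iS x bS by (simp add: ldistr)
    also have "x \<otimes> b = x \<otimes> j \<oplus> x \<otimes> y" using j iS x y by (simp add: rdistr)
    finally have "a \<otimes> b = i \<otimes> (j \<oplus> y) \<oplus> (x \<otimes> j \<oplus> x \<otimes> y)" using j by simp
    also have "\<dots> = (i \<otimes> (j \<oplus> y) \<oplus> x \<otimes> j) \<oplus> x \<otimes> y"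
      using iS x y by (simp add: mclosed a_assoc)
    finally have ab: "a \<otimes> b = (i \<otimes> (j \<oplus> y) \<oplus> x \<otimes> j) \<oplus> x \<otimes> y" .
    have "i \<otimes> (j \<oplus> y) \<oplus> x \<otimes> j \<in> I"
      using i j iS x y idl idr by simp
    then have "a \<otimes> b \<in> I +> (x \<otimes> y)"
      unfolding ab by (rule a_rcosI) (use a_subset x y mclosed in auto)
    then show ?thesis by (rule a_repr_independence[symmetric]) (use x y mclosed a_subgroup in auto)
  qed
  moreover have "x \<in> I +> x" "y \<in> I +> y" using x y a_rcos_self by auto
  ultimately have "(\<Union>a\<in>I +> x. \<Union>b\<in>I +> y. I +> (a \<otimes> b)) = I +> (x \<otimes> y)"
    by blast
  then show ?thesis unfolding pr_def FactRing_def rcoset_mult_def by simp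
qed

lemma abmQ: "abelian_monoid Q" using abQ abelian_group.axioms(1) by blast

lemma pr_finsum: assumes "finite F" "f \<in> F \<rightarrow> carrier S"
  shows "finsum Q (\<lambda>g. pr (f g)) F = pr (finsum S f F)"
  using assms
proof (induction F rule: finite_induct)
  case empty
  have "pr \<zero> = \<zero>\<^bsub>Q\<^esub>" using pr_zero_iff[of "\<zero>"] by simp
  then show ?case using abelian_monoid.finsum_empty[OF abmQ] by simp
next
  case (insert a F)
  have "finsum Q (\<lambda>g. pr (f g)) (insert a F) = pr (f a) \<oplus>\<^bsub>Q\<^esub> finsum Q (\<lambda>g. pr (f g)) F"
    by (rule abelian_monoid.finsum_insert[OF abmQ]) (use insert pr_closed in auto)
  also have "\<dots> = pr (f a) \<oplus>\<^bsub>Q\<^esub> pr (finsum S f F)" using insert by simp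
  also have "\<dots> = pr (f a \<oplus> finsum S f F)" using insert by (intro pr_add) (auto intro: finsum_closed)
  also have "f a \<oplus> finsum S f F = finsum S f (insert a F)" using insert by (simp add: finsum_insert)
  finally show ?case .
qed

lemma rsp_elim: "z \<in> ring_subset_prod R X Y \<Longrightarrow> \<exists>n f h. z = finsum R (\<lambda>i. f i \<otimes>\<^bsub>R\<^esub> h i) {..<(n::nat)} \<and> (\<forall>i<n. f i \<in> X \<and> h i \<in> Y)"
  by (auto simp: ring_subset_prod_def)

lemma rsp_intro: "(\<forall>i<n. f i \<in> X \<and> h i \<in> Y) \<Longrightarrow> finsum R (\<lambda>i. f i \<otimes>\<^bsub>R\<^esub> h i) {..<(n::nat)} \<in> ring_subset_prod R X Y"
  by (auto simp: ring_subset_prod_def)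

lemma rsp_carrier: "X \<subseteq> carrier S \<Longrightarrow> Y \<subseteq> carrier S \<Longrightarrow> ring_subset_prod S X Y \<subseteq> carrier S"
  unfolding ring_subset_prod_def using mclosed by (auto intro!: finsum_closed) (meson in_mono lessThan_iff)

lemma rsp_pr: assumes X: "X \<subseteq> carrier S" and Y: "Y \<subseteq> carrier S"
  shows "ring_subset_prod Q (pr ` X) (pr ` Y) = pr ` ring_subset_prod S X Y"
proof
  show "ring_subset_prod Q (pr ` X) (pr ` Y) \<subseteq> pr ` ring_subset_prod S X Y"
  proof
    fix z assume "z \<in> ring_subset_prod Q (pr ` X) (pr ` Y)"
    from rsp_elim[OF this] obtain n f h where z: "z = finsum Q (\<lambda>i. f i \<otimes>\<^bsub>Q\<^esub> h i) {..<(n::nat)}"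
      and fh: "\<forall>i<n. f i \<in> pr ` X \<and> h i \<in> pr ` Y"
      by blast
    have "\<forall>i\<in>{..<n}. \<exists>x. x \<in> X \<and> f i = pr x" using fh by blast
    from bchoice[OF this] obtain f' where f': "\<forall>i\<in>{..<n}. f' i \<in> X \<and> f i = pr (f' i)" by blast
    have "\<forall>i\<in>{..<n}. \<exists>x. x \<in> Y \<and> h i = pr x" using fh by blast
    from bchoice[OF this] obtain h' where h': "\<forall>i\<in>{..<n}. h' i \<in> Y \<and> h i = pr (h' i)" by blast
    have "z = finsum Q (\<lambda>i. pr (f' i \<otimes> h' i)) {..<n}"
      unfolding z
    proof (rule abelian_monoid.finsum_cong'[OF abmQ])
      show "(\<lambda>i. pr (f' i \<otimes> h' i)) \<in> {..<n} \<rightarrow> carrier Q"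
        using f' h' X Y by (auto intro!: pr_closed mclosed)
      fix i assume "i \<in> {..<n}"
      then have "f i = pr (f' i)" "h i = pr (h' i)" "f' i \<in> carrier S" "h' i \<in> carrier S"
        using f' h' X Y by auto
      then show "f i \<otimes>\<^bsub>Q\<^esub> h i = pr (f' i \<otimes> h' i)"
        using pr_mult by simp
    qed simp
    also have "\<dots> = pr (finsum S (\<lambda>i. f' i \<otimes> h' i) {..<n})"
      by (rule pr_finsum) (use f' h' X Y in \<open>auto intro!: mclosed\<close>)
    finally have zeq: "z = pr (finsum S (\<lambda>i. f' i \<otimes> h' i) {..<n})" .
    have "finsum S (\<lambda>i. f' i \<otimes> h' i) {..<n} \<in> ring_subset_prod S X Y"
      by (rule rsp_intro) (use f' h' in auto)
    then show "z \<in> pr ` ring_subset_prod S X Y" using zeq by blast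
  qed
next
  show "pr ` ring_subset_prod S X Y \<subseteq> ring_subset_prod Q (pr ` X) (pr ` Y)"
  proof
    fix z assume "z \<in> pr ` ring_subset_prod S X Y"
    then obtain w where w: "w \<in> ring_subset_prod S X Y" and zw: "z = pr w" by blast
    obtain n f h where z': "w = finsum S (\<lambda>i. f i \<otimes> h i) {..<(n::nat)}"
      and fh: "\<forall>i<n. f i \<in> X \<and> h i \<in> Y"
      using rsp_elim[OF w] by blast
    have z: "z = pr (finsum S (\<lambda>i. f i \<otimes> h i) {..<n})" using zw z' by simp
    have "z = finsum Q (\<lambda>i. pr (f i \<otimes> h i)) {..<n}"
      unfolding z by (rule pr_finsum[symmetric]) (use fh X Y in \<open>auto intro!: mclosed\<close>)
    also have "\<dots> = finsum Q (\<lambda>i. pr (f i) \<otimes>\<^bsub>Q\<^esub> pr (h i)) {..<n}"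
    proof (rule abelian_monoid.finsum_cong'[OF abmQ])
      show "(\<lambda>i. pr (f i) \<otimes>\<^bsub>Q\<^esub> pr (h i)) \<in> {..<n} \<rightarrow> carrier Q"
      proof
        fix i assume "i \<in> {..<n}"
        then have "f i \<in> carrier S" "h i \<in> carrier S" using fh X Y by auto
        then show "pr (f i) \<otimes>\<^bsub>Q\<^esub> pr (h i) \<in> carrier Q"
          using pr_mult pr_closed mclosed by simp
      qed
      fix i assume "i \<in> {..<n}"
      then have "f i \<in> carrier S" "h i \<in> carrier S" using fh X Y by auto
      then show "pr (f i \<otimes> h i) = pr (f i) \<otimes>\<^bsub>Q\<^esub> pr (h i)"
        using pr_mult by simp
    qed simp
    finally show "z \<in> ring_subset_prod Q (pr ` X) (pr ` Y)"
      by (simp add: rsp_intro fh)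
  qed
qed

lemma pr_hom: "pr \<in> hom (add_monoid S) (add_monoid Q)"
  using a_r_coset_hom_A_Mod addQ unfolding pr_def by simp

lemma pr_subgroup: assumes "additive_subgroup H S" shows "additive_subgroup (pr ` H) Q"
proof -
  have "group_hom (add_monoid S) (add_monoid Q) pr"
    using pr_hom abelian_group.a_group[OF abQ] abelian_group.a_group[OF abS]
    by (simp add: group_hom_def group_hom_axioms_def)
  then show ?thesis using assms
    by (simp add: additive_subgroup_def group_hom.subgroup_img_is_subgroup)
qed

lemma finsum_neg: assumes "finite F" "b \<in> F \<rightarrow> carrier S"
  shows "finsum S (\<lambda>g. \<ominus> b g) F = \<ominus> finsum S b F"
  using assms
proof (induction F rule: finite_induct)
  case empty
  show ?case by (simp add: a_inv_def)
next
  case (insert a F)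
  then have bF: "b \<in> F \<rightarrow> carrier S" and ba: "b a \<in> carrier S" by auto
  have "finsum S (\<lambda>g. \<ominus> b g) (insert a F) = \<ominus> b a \<oplus> finsum S (\<lambda>g. \<ominus> b g) F"
    by (rule finsum_insert) (use insert in auto)
  also have "\<dots> = \<ominus> b a \<oplus> \<ominus> finsum S b F" using insert bF by simp
  also have "\<dots> = \<ominus> (b a \<oplus> finsum S b F)" using ba bF by (simp add: minus_add finsum_closed)
  also have "b a \<oplus> finsum S b F = finsum S b (insert a F)" using insert by (simp add: finsum_insert)
  finally show ?case .
qed

lemma main:
  fixes G :: "('g, 'c) monoid_scheme" and A :: "'g \<Rightarrow> 'a set"
  assumes grp: "group G" and es: "epsilon_strong S G A" and hom: "homogeneous_ideal S G A I"
  shows "epsilon_strong Q G (\<lambda>g. pr ` A g)"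
proof -
  have gr: "graded S G A" using es unfolding epsilon_strong_def by blast
  note grs = gr[unfolded graded_def]
  have Asub: "\<And>g. g \<in> carrier G \<Longrightarrow> additive_subgroup (A g) S"
    using grs[THEN conjunct1] by blast
  have AS: "\<And>g. g \<in> carrier G \<Longrightarrow> A g \<subseteq> carrier S"
    using Asub by (simp add: additive_subgroup.a_subset)
  have prod: "\<And>g h. g \<in> carrier G \<Longrightarrow> h \<in> carrier G \<Longrightarrow> ring_subset_prod S (A g) (A h) \<subseteq> A (g \<otimes>\<^bsub>G\<^esub> h)"
    using grs[THEN conjunct2, THEN conjunct1] by blast
  have dec: "\<And>x. x \<in> carrier S \<Longrightarrow> \<exists>F f. finite F \<and> F \<subseteq> carrier G \<and> (\<forall>g\<in>F. f g \<in> A g) \<and> x = finsum S f F"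
    using grs[THEN conjunct2, THEN conjunct2, THEN conjunct1] by blast
  have uniq: "\<And>F f. finite F \<Longrightarrow> F \<subseteq> carrier G \<Longrightarrow> (\<forall>g\<in>F. f g \<in> A g) \<Longrightarrow> finsum S f F = \<zero> \<Longrightarrow> (\<forall>g\<in>F. f g = \<zero>)"
    using grs[THEN conjunct2, THEN conjunct2, THEN conjunct2] by blast
  have G1: "\<forall>g\<in>carrier G. additive_subgroup (pr ` A g) Q"
    using Asub by (simp add: pr_subgroup)
  have G2: "\<forall>g\<in>carrier G. \<forall>h\<in>carrier G. ring_subset_prod Q (pr ` A g) (pr ` A h) \<subseteq> pr ` A (g \<otimes>\<^bsub>G\<^esub> h)"
    using rsp_pr AS prod by (metis image_mono)
  have G3: "\<forall>x\<in>carrier Q. \<exists>F f. finite F \<and> F \<subseteq> carrier G \<and> (\<forall>g\<in>F. f g \<in> pr ` A g) \<and> x = finsum Q f F"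
  proof
    fix x assume "x \<in> carrier Q"
    then obtain y where y: "y \<in> carrier S" "x = pr y" unfolding carrierQ by blast
    obtain F f where F: "finite F" "F \<subseteq> carrier G" "\<forall>g\<in>F. f g \<in> A g" "y = finsum S f F"
      using dec[OF y(1)] by blast
    have fS: "f \<in> F \<rightarrow> carrier S" using F AS by blast
    have "x = finsum Q (\<lambda>g. pr (f g)) F" using pr_finsum[OF F(1) fS] F y by simp
    moreover have "\<forall>g\<in>F. pr (f g) \<in> pr ` A g" using F(3) by blast
    ultimately show "\<exists>F f. finite F \<and> F \<subseteq> carrier G \<and> (\<forall>g\<in>F. f g \<in> pr ` A g) \<and> x = finsum Q f F"
      using F(1,2) by (intro exI[of _ F] exI[of _ "\<lambda>g. pr (f g)"]) simp
  qed
  have G4: "\<forall>F f. finite F \<and> F \<subseteq> carrier G \<and> (\<forall>g\<in>F. f g \<in> pr ` A g) \<and> finsum Q f F = \<zero>\<^bsub>Q\<^esub>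
        \<longrightarrow> (\<forall>g\<in>F. f g = \<zero>\<^bsub>Q\<^esub>)"
  proof (intro allI impI)
    fix F f assume asm: "finite F \<and> F \<subseteq> carrier G \<and> (\<forall>g\<in>F. f g \<in> pr ` A g) \<and> finsum Q f F = \<zero>\<^bsub>Q\<^esub>"
    then have F: "finite F" "F \<subseteq> carrier G" and f0: "finsum Q f F = \<zero>\<^bsub>Q\<^esub>" by auto
    have "\<forall>g\<in>F. \<exists>y. y \<in> A g \<and> f g = pr y" using asm by blast
    from bchoice[OF this] obtain f' where f': "\<forall>g\<in>F. f' g \<in> A g \<and> f g = pr (f' g)" by blast
    have f'S: "f' \<in> F \<rightarrow> carrier S" using f' F AS by blast
    have "finsum Q f F = finsum Q (\<lambda>g. pr (f' g)) F"
      by (rule abelian_monoid.finsum_cong'[OF abmQ]) (use f' f'S pr_closed in auto)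
    also have "\<dots> = pr (finsum S f' F)" using pr_finsum[OF F(1) f'S] by simp
    finally have "pr (finsum S f' F) = \<zero>\<^bsub>Q\<^esub>" using f0 by simp
    then have "finsum S f' F \<in> I" using pr_zero_iff finsum_closed[OF f'S] by blast
    from hom[unfolded homogeneous_ideal_def, rule_format, OF this]
    obtain F' k where F': "finite F'" "F' \<subseteq> carrier G" "\<forall>g\<in>F'. k g \<in> I \<inter> A g"
        and xk: "finsum S f' F = finsum S k F'"
      by blast
    define U where "U = F \<union> F'"
    define a where "a g = (if g \<in> F then f' g else \<zero>)" for g
    define b where "b g = (if g \<in> F' then k g else \<zero>)" for g
    have U: "finite U" "U \<subseteq> carrier G" using F F' unfolding U_def by auto
    have z: "\<And>g. g \<in> U \<Longrightarrow> \<zero> \<in> A g" using U Asub additive_subgroup.zero_closed by blast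
    have aA: "\<forall>g\<in>U. a g \<in> A g" unfolding a_def using f' z by simp
    have bA: "\<forall>g\<in>U. b g \<in> A g" unfolding b_def using F'(3) z by simp
    have aS: "a \<in> U \<rightarrow> carrier S" using aA U AS by blast
    have bS: "b \<in> U \<rightarrow> carrier S" using bA U AS by blast
    have sa: "finsum S f' F = finsum S a U"
      by (rule add.finprod_mono_neutral_cong_left) (use U aS in \<open>auto simp: U_def a_def\<close>)
    have sb: "finsum S k F' = finsum S b U"
      by (rule add.finprod_mono_neutral_cong_left) (use U bS in \<open>auto simp: U_def b_def\<close>)
    define d where "d g = a g \<oplus> \<ominus> b g" for g
    have dA: "\<forall>g\<in>U. d g \<in> A g"
      using aA bA U Asub unfolding d_def by (meson additive_subgroup.a_closed additive_subgroup.a_inv_closed subsetD)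
    have "finsum S d U = finsum S a U \<oplus> finsum S (\<lambda>g. \<ominus> b g) U"
      unfolding d_def by (rule finsum_addf) (use aS bS in auto)
    also have "\<dots> = finsum S a U \<oplus> \<ominus> finsum S b U" using finsum_neg[OF U(1) bS] by simp
    also have "\<dots> = \<zero>" using sa sb xk bS finsum_closed r_neg unfolding a_inv_def by metis
    finally have "finsum S d U = \<zero>" .
    then have d0: "\<forall>g\<in>U. d g = \<zero>" using uniq U dA by blast
    show "\<forall>g\<in>F. f g = \<zero>\<^bsub>Q\<^esub>"
    proof
      fix g assume g: "g \<in> F"
      then have gU: "g \<in> U" unfolding U_def by auto
      have ac: "a g \<in> carrier S" and bc: "b g \<in> carrier S" using aS bS gU by auto
      have "a g = a g \<oplus> (\<ominus> b g \<oplus> b g)" using ac bc l_neg by (simp add: a_inv_def)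
      also have "\<dots> = d g \<oplus> b g" unfolding d_def using ac bc by (simp add: a_assoc)
      also have "\<dots> = b g" using d0 gU bc by simp
      finally have "a g = b g" .
      moreover have "b g \<in> I" using F' unfolding b_def by auto
      ultimately have "f' g \<in> I" using g unfolding a_def by simp
      then show "f g = \<zero>\<^bsub>Q\<^esub>" using f' g pr_zero_iff f'S by auto
    qed
  qed
  have E: "\<forall>g\<in>carrier G.
        ring_subset_prod Q (ring_subset_prod Q (pr ` A g) (pr ` A (inv\<^bsub>G\<^esub> g))) (pr ` A g) = pr ` A g \<and>
        (\<exists>e\<in>ring_subset_prod Q (pr ` A g) (pr ` A (inv\<^bsub>G\<^esub> g)).
           \<forall>x\<in>ring_subset_prod Q (pr ` A g) (pr ` A (inv\<^bsub>G\<^esub> g)). e \<otimes>\<^bsub>Q\<^esub> x = x \<and> x \<otimes>\<^bsub>Q\<^esub> e = x)"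
  proof
    fix g assume g: "g \<in> carrier G"
    define g' where "g' = inv\<^bsub>G\<^esub> g"
    have g': "g' \<in> carrier G" using g grp unfolding g'_def by (simp add: group.inv_closed)
    define P where "P = ring_subset_prod S (A g) (A g')"
    have PS: "P \<subseteq> carrier S" unfolding P_def using rsp_carrier AS g g' by blast
    have P1: "ring_subset_prod Q (pr ` A g) (pr ` A g') = pr ` P"
      unfolding P_def using rsp_pr AS g g' by blast
    have e1: "ring_subset_prod S P (A g) = A g" and
      e2: "\<exists>e\<in>P. \<forall>x\<in>P. e \<otimes> x = x \<and> x \<otimes> e = x"
      using es g unfolding epsilon_strong_def P_def g'_def by blast+
    have "ring_subset_prod Q (pr ` P) (pr ` A g) = pr ` A g"
      using rsp_pr[OF PS AS[OF g]] e1 by simp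
    moreover have "\<exists>e\<in>pr ` P. \<forall>x\<in>pr ` P. e \<otimes>\<^bsub>Q\<^esub> x = x \<and> x \<otimes>\<^bsub>Q\<^esub> e = x"
    proof -
      obtain e where e: "e \<in> P" "\<forall>x\<in>P. e \<otimes> x = x \<and> x \<otimes> e = x" using e2 by blast
      have "\<forall>x\<in>pr ` P. pr e \<otimes>\<^bsub>Q\<^esub> x = x \<and> x \<otimes>\<^bsub>Q\<^esub> pr e = x"
      proof
        fix x assume "x \<in> pr ` P"
        then obtain y where y: "y \<in> P" "x = pr y" by blast
        have "e \<in> carrier S" "y \<in> carrier S" using e y PS by auto
        then show "pr e \<otimes>\<^bsub>Q\<^esub> x = x \<and> x \<otimes>\<^bsub>Q\<^esub> pr e = x"
          using pr_mult e y by simp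
      qed
      then show ?thesis using e by blast
    qed
    ultimately show "ring_subset_prod Q (ring_subset_prod Q (pr ` A g) (pr ` A (inv\<^bsub>G\<^esub> g))) (pr ` A g) = pr ` A g \<and>
        (\<exists>e\<in>ring_subset_prod Q (pr ` A g) (pr ` A (inv\<^bsub>G\<^esub> g)).
           \<forall>x\<in>ring_subset_prod Q (pr ` A g) (pr ` A (inv\<^bsub>G\<^esub> g)). e \<otimes>\<^bsub>Q\<^esub> x = x \<and> x \<otimes>\<^bsub>Q\<^esub> e = x)"
      using P1 unfolding g'_def by simp
  qed
  show ?thesis unfolding epsilon_strong_def graded_def
    using G1 G2 G3 G4 E by blast
qed

end

theorem proposition3p11:
  fixes G :: "('g, 'c) monoid_scheme" and S :: "('a, 'b) ring_scheme"
    and A :: "'g \<Rightarrow> 'a set" and I :: "'a set"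
  assumes "group G"
    and "nonunital_ring S"
    and "epsilon_strong S G A"
    and "nonunital_ideal I S"
    and "homogeneous_ideal S G A I"
  shows "epsilon_strong (S Quot I) G (quot_grading S A I)"
proof -
  interpret qctx S I using assms by (simp add: qctx_def)
  have "quot_grading S A I = (\<lambda>g. pr ` A g)"
    by (simp add: quot_grading_def pr_def fun_eq_iff)
  then show ?thesis using main assms by simp
qed

end
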